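(* For integers $n\ge0$ and $k\ge0$ define $$F(n,k)=(-1)^k(4n+1)\frac{(\frac12)_n^3(\frac12)_{n+k}}{(1)_n^3\,(1)_{n-k}\,(\frac12)_k^2},\qquad G(n,k)=(-1)^{k-1}\frac{4(\frac12)_n^3(\frac12)_{n+k-1}}{(1)_{n-1}^3\,(1)_{n-k}\,(\frac12)_k^2},$$ with the convention $1/(1)_j=0$ for negative integers $j$ (so $F(n,k)=0$ for $k>n$ and $G(0,k)=0$ for $k>0$). Then for every $n\in\mathbb N$ and every positive integer $k$, $$(2k-1)F(n,k-1)-2kF(n,k)=G(n+1,k)-G(n,k),$$ and for every $m\in\mathbb N$, $$\sum_{n=0}^{m}F(n,0)=\frac{4^m}{\binom{2m}{m}}F(m,m)+\sum_{k=1}^m\frac{4^{k-1}\,G(m+1,k)}{(2k-1)\binom{2k-2}{k-1}}.$$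
   Context: $(x)_k=x(x+1)\cdots(x+k-1)$ is the Pochhammer symbol, with $(x)_0=1$; $(1)_j=j!$ for $j\ge0$. *)

theory Defs
  imports Complex_Main
begin

definition recip_poch1 :: "int \<Rightarrow> real" where
  "recip_poch1 j = (if j < 0 then 0 else 1 / fact (nat j))"

definition F :: "nat \<Rightarrow> nat \<Rightarrow> real" where
  "F n k = (-1) ^ k * (4 * real n + 1) * pochhammer (1/2) n ^ 3 * pochhammer (1/2) (n + k)
     * recip_poch1 (int n) ^ 3 * recip_poch1 (int n - int k) / (pochhammer (1/2) k) ^ 2"

text \<open>(-1)^(k-1) is written as -((-1)^k). G(n,k) is only used for k \<ge> 1.\<close>
definition G :: "nat \<Rightarrow> nat \<Rightarrow> real" where
  "G n k = - ((-1) ^ k) * 4 * pochhammer (1/2) n ^ 3 * pochhammer (1/2) (n + k - 1)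
     * recip_poch1 (int n - 1) ^ 3 * recip_poch1 (int n - int k) / (pochhammer (1/2) k) ^ 2"

end

theory Submission imports Defs begin
lemma cb: "((2*j+2) choose (j+1)) * (j+1) = 2*(2*j+1)*((2*j) choose j)"
proof -
  define X where "X = ((2*j+2) choose (j+1))"
  define Y where "Y = ((2*j+1) choose j)"
  define Y' where "Y' = ((2*j+1) choose (j+1))"
  define Z where "Z = ((2*j) choose j)"
  have a: "X * (j+1) = (2*j+2) * Y" unfolding X_def Y_def
    using Suc_times_binomial_eq[of "2*j+1" j] by (simp add: algebra_simps)
  have b: "Y' * (j+1) = (2*j+1) * Z" unfolding Y'_def Z_def
    using Suc_times_binomial_eq[of "2*j" j] by (simp add: algebra_simps)
  have c: "Y' = Y" unfolding Y'_def Y_def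
    using binomial_symmetric[of j "2*j+1"] by simp
  have "X * (j+1) = 2 * (Y' * (j+1))" using a c by (simp add: algebra_simps)
  also have "... = 2*(2*j+1)*Z" using b by simp
  finally show ?thesis unfolding X_def Z_def .
qed

lemma recip_step: "m \<ge> 0 \<Longrightarrow> recip_poch1 (m - 1) = of_int m * recip_poch1 m"
proof (cases "m = 0")
  case False
  assume "m \<ge> 0"
  then obtain t where t: "m = int (Suc t)" using False by (metis not0_implies_Suc nat_0_le zero_le_imp_eq_int int_eq_iff nat_int of_nat_0 pos_int_cases le_neq_implies_less)
  have "nat (1 + int t) = Suc t" by simp
  then show ?thesis unfolding recip_poch1_def t by (simp add: nat_diff_distrib)
qed (simp add: recip_poch1_def)

lemma recip_neg: "j < 0 \<Longrightarrow> recip_poch1 j = 0" by (simp add: recip_poch1_def)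

lemma part1: "(2 * real (Suc j) - 1) * F n j - 2 * real (Suc j) * F n (Suc j) = G (n + 1) (Suc j) - G n (Suc j)"
proof (cases "j \<le> n")
  case True
  define R where "R = recip_poch1 (int n - int j)"
  define r where "r = recip_poch1 (int n)"
  define a where "a = pochhammer (1/2::real) n"
  define p where "p = pochhammer (1/2::real) (n+j)"
  define q where "q = pochhammer (1/2::real) j"
  have e1: "recip_poch1 (int n - int (Suc j)) = real (n-j) * R"
    using recip_step[of "int n - int j"] True unfolding R_def by (simp add: of_nat_diff algebra_simps)
  have e2: "recip_poch1 (int (n+1) - int (Suc j)) = R" unfolding R_def by simp
  have e3: "recip_poch1 (int (n+1) - 1) = r" unfolding r_def by simp
  have e4: "recip_poch1 (int n - 1) = real n * r" using recip_step[of "int n"] unfolding r_def by simp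
  have p1: "pochhammer (1/2::real) (n + Suc j) = p * (1/2 + real (n+j))"
    unfolding p_def by (simp add: pochhammer_Suc)
  have p2: "pochhammer (1/2::real) (n + 1 + Suc j - 1) = p * (1/2 + real (n+j))"
    unfolding p_def by (simp add: pochhammer_Suc)
  have p3: "pochhammer (1/2::real) (n + Suc j - 1) = p" unfolding p_def by simp
  have p4: "pochhammer (1/2::real) (Suc j) = q * (1/2 + real j)" unfolding q_def by (simp add: pochhammer_Suc)
  have p5: "pochhammer (1/2::real) (n+1) = a * (1/2 + real n)" unfolding a_def by (simp add: pochhammer_Suc)
  have qnz: "q \<noteq> 0" unfolding q_def by (simp add: pochhammer_eq_0_iff)
  define X where "X = a^3 * p * r^3 * R / q^2"
  define s where "s = ((-1::real)^j)"
  have f1: "F n j = s * (4*real n+1) * X"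
    unfolding F_def X_def s_def a_def p_def q_def r_def R_def by (simp add: field_simps)
  define c where "c = 1/2 + real j"
  define u where "u = 1/2 + real (n+j)"
  define v where "v = 1/2 + real n"
  have cnz: "c \<noteq> 0" unfolding c_def by simp
  have p1': "pochhammer (1/2::real) (n + Suc j) = p * u" using p1 unfolding u_def .
  have p2': "pochhammer (1/2::real) (n + 1 + Suc j - 1) = p * u" using p2 unfolding u_def .
  have p4': "pochhammer (1/2::real) (Suc j) = q * c" using p4 unfolding c_def .
  have p5': "pochhammer (1/2::real) (n+1) = a * v" using p5 unfolding v_def .
  have f2: "F n (Suc j) = - s * (4*real n+1) * u * real (n-j) * X / c^2"
    unfolding F_def e1 p1' p4' unfolding a_def[symmetric] p_def[symmetric] q_def[symmetric] r_def[symmetric] R_def[symmetric] X_def s_def using qnz cnz by (simp add: field_simps power_mult_distrib)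
  have g1: "G (n+1) (Suc j) = s * 4 * v^3 * u * X / c^2"
    unfolding G_def e2 e3 p2' p4' p5' unfolding a_def[symmetric] p_def[symmetric] q_def[symmetric] r_def[symmetric] R_def[symmetric] X_def s_def using qnz cnz by (simp add: field_simps power_mult_distrib)
  have g2: "G n (Suc j) = s * 4 * real n^3 * real (n-j) * X / c^2"
    unfolding G_def e1 e4 p3 p4' unfolding a_def[symmetric] p_def[symmetric] q_def[symmetric] r_def[symmetric] R_def[symmetric] X_def s_def using qnz cnz by (simp add: field_simps power_mult_distrib)
  have uu: "u = 1/2+real n+real j" unfolding u_def by simp
  note f2 = f2[unfolded uu c_def] and g1 = g1[unfolded uu c_def v_def] and g2 = g2[unfolded c_def]
  have poly: "\<And>x y::real. (2*y+1)*(4*x+1)*(1/2+y)^2 + 2*(y+1)*(4*x+1)*(1/2+x+y)*(x-y) = 4*(1/2+x)^3*(1/2+x+y) - 4*x^3*(x-y)"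
    by (simp add: algebra_simps power2_eq_square power3_eq_cube)
  have nz: "(1/2 + real j) \<noteq> 0" by simp
  have rd: "real (n-j) = real n - real j" using True by (simp add: of_nat_diff)
  have "(2 * real (Suc j) - 1) * F n j - 2 * real (Suc j) * F n (Suc j)
      = s * X * ((2*real j+1)*(4*real n+1)*(1/2+real j)^2 + 2*(real j+1)*(4*real n+1)*(1/2+real n+real j)*(real n-real j)) / (1/2+real j)^2"
    unfolding f1 f2 rd using nz by (simp add: field_simps)
  also have "... = s * X * (4*(1/2+real n)^3*(1/2+real n+real j) - 4*real n^3*(real n-real j)) / (1/2+real j)^2"
    by (simp only: poly)
  also have "... = G (n + 1) (Suc j) - G n (Suc j)"
    unfolding g1 g2 rd using nz by (simp add: field_simps)
  finally show ?thesis by simp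
next
  case False
  then show ?thesis unfolding F_def G_def by (simp add: recip_neg)
qed
lemma part1': "k \<ge> 1 \<Longrightarrow> (2 * real k - 1) * F n (k - 1) - 2 * real k * F n k = G (n + 1) k - G n k"
  using part1[of "k-1" n] by simp

definition cc :: "nat \<Rightarrow> real" where
  "cc k = 4^(k-1) / ((2*real k - 1) * real ((2*k-2) choose (k-1)))"

lemma cb_real: "real ((2*j+2) choose (j+1)) = 2*(2*real j+1)*real ((2*j) choose j) / (real j + 1)"
proof -
  have "real (((2*j+2) choose (j+1)) * (j+1)) = real (2*(2*j+1)*((2*j) choose j))" using cb by metis
  then show ?thesis by (simp add: field_simps)
qed

lemma v1: "0 < (Z::real) \<Longrightarrow> 4^(j+1) / ((2*real (Suc (Suc j)) - 1) * (2*(2*real j+1)*Z / (real j + 1))) * (2*real j + 3) = 2*(real j+1) * (4^j / ((2*real (Suc j) - 1) * Z))"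
proof -
  assume Z: "0 < Z"
  have h: "2*real (Suc (Suc j)) - 1 = 2*real j + 3" "2*real (Suc j) - 1 = 2*real j + 1" by simp_all
  have p: "2*real j + 3 > 0" "2*real j + 1 > 0" "real j + 1 > 0" by simp_all
  show ?thesis unfolding h using Z p by (simp add: divide_simps) (simp add: algebra_simps)
qed
lemma v2: "0 < (Z::real) \<Longrightarrow> 4^(j+1) / (2*(2*real j+1)*Z / (real j + 1)) = 2 * real (Suc j) * (4^j / ((2*real (Suc j) - 1) * Z))"
proof -
  assume Z: "0 < Z"
  have h: "2*real (Suc j) - 1 = 2*real j + 1" by simp_all
  have p: "2*real j + 3 > 0" "2*real j + 1 > 0" "real j + 1 > 0" by simp_all
  show ?thesis unfolding h using Z p by (simp add: divide_simps) (simp add: algebra_simps)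
qed
lemma cc_rec: "cc (Suc (Suc j)) * (2*real j + 3) = 2*(real j+1) * cc (Suc j)"
proof -
  have e: "2 * Suc (Suc j) - 2 = 2*j+2" "Suc (Suc j) - 1 = j+1" "2 * Suc j - 2 = 2*j" "Suc j - 1 = j" by simp_all
  have "cc (Suc (Suc j)) = 4^(j+1) / ((2*real (Suc (Suc j)) - 1) * real ((2*j+2) choose (j+1)))"
    unfolding cc_def e ..
  also have "... = 4^(j+1) / ((2*real (Suc (Suc j)) - 1) * (2*(2*real j+1)*real ((2*j) choose j) / (real j + 1)))"
    unfolding cb_real ..
  finally have A: "cc (Suc (Suc j)) = 4^(j+1) / ((2*real (Suc (Suc j)) - 1) * (2*(2*real j+1)*real ((2*j) choose j) / (real j + 1)))" .
  have B: "cc (Suc j) = 4^j / ((2*real (Suc j) - 1) * real ((2*j) choose j))" unfolding cc_def e ..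
  define Z where "Z = real ((2*j) choose j)"
  have b: "Z > 0" unfolding Z_def by simp
  show ?thesis unfolding A B Z_def[symmetric] using b by (rule v1)
qed

lemma cc_central: "4 ^ Suc j / real ((2 * Suc j) choose Suc j) = 2 * real (Suc j) * cc (Suc j)"
proof -
  have e: "2 * Suc j = 2*j+2" "2 * Suc j - 2 = 2*j" "Suc j - 1 = j" "Suc j = j+1" by simp_all
  have A0: "real ((2 * Suc j) choose Suc j) = 2*(2*real j+1)*real ((2*j) choose j) / (real j + 1)"
    using cb_real[of j, folded e(1,4)] .
  have A: "4 ^ Suc j / real ((2 * Suc j) choose Suc j) = 4^(j+1) / (2*(2*real j+1)*real ((2*j) choose j) / (real j + 1))"
    unfolding A0 by simp
  have B: "cc (Suc j) = 4^j / ((2*real (Suc j) - 1) * real ((2*j) choose j))" unfolding cc_def e(2,3) ..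
  define Z where "Z = real ((2*j) choose j)"
  have b: "Z > 0" unfolding Z_def by simp
  show ?thesis unfolding A B Z_def[symmetric] using b by (rule v2)
qed

lemma tele: "(\<Sum>k=1..Suc K. cc k * ((2*real k - 1) * F n (k-1) - 2*real k * F n k))
   = F n 0 - 2*real (Suc K) * cc (Suc K) * F n (Suc K)"
proof (induction K)
  case 0
  have "cc 1 = 1" unfolding cc_def by simp
  then show ?case by simp
next
  case (Suc K)
  have r: "cc (Suc (Suc K)) * (2*real (Suc (Suc K)) - 1) = 2*real (Suc K) * cc (Suc K)"
    using cc_rec[of K] by (simp add: algebra_simps)
  have "(\<Sum>k=1..Suc (Suc K). cc k * ((2*real k - 1) * F n (k-1) - 2*real k * F n k))
     = (\<Sum>k=1..Suc K. cc k * ((2*real k - 1) * F n (k-1) - 2*real k * F n k))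
       + cc (Suc (Suc K)) * ((2*real (Suc (Suc K)) - 1) * F n (Suc K) - 2*real (Suc (Suc K)) * F n (Suc (Suc K)))"
    by simp
  also have "... = F n 0 - 2*real (Suc K) * cc (Suc K) * F n (Suc K)
       + (cc (Suc (Suc K)) * (2*real (Suc (Suc K)) - 1)) * F n (Suc K) - 2*real (Suc (Suc K)) * cc (Suc (Suc K)) * F n (Suc (Suc K))"
    unfolding Suc.IH by (simp add: algebra_simps)
  also have "... = F n 0 - 2*real (Suc (Suc K)) * cc (Suc (Suc K)) * F n (Suc (Suc K))"
    unfolding r by simp
  finally show ?case .
qed

lemma F_zero: "n < m \<Longrightarrow> F n m = 0" unfolding F_def by (simp add: recip_neg)
lemma G_zero: "G 0 k = 0" unfolding G_def by (simp add: recip_neg)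

lemma part2: "(\<Sum>n=0..m. F n 0) =
            4 ^ m / real ((2 * m) choose m) * F m m
            + (\<Sum>k=1..m. 4 ^ (k - 1) * G (m + 1) k
                 / ((2 * real k - 1) * real ((2 * k - 2) choose (k - 1))))"
proof (cases m)
  case 0
  then show ?thesis by simp
next
  case (Suc M)
  define S where "S n = (\<Sum>k=1..m. cc k * ((2*real k - 1) * F n (k-1) - 2*real k * F n k))" for n
  have "(\<Sum>n=0..m. F n 0) = (\<Sum>n=0..m. S n + 2*real m * cc m * F n m)"
    unfolding S_def Suc tele by simp
  also have "... = (\<Sum>n=0..m. S n) + 2*real m * cc m * (\<Sum>n=0..m. F n m)"
    by (simp add: sum.distrib sum_distrib_left)
  also have "(\<Sum>n=0..m. F n m) = F m m"
    unfolding Suc sum.atLeast0_atMost_Suc by (simp add: F_zero)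
  also have "(\<Sum>n=0..m. S n) = (\<Sum>k=1..m. cc k * (\<Sum>n=0..m. G (n+1) k - G n k))"
    unfolding S_def
  proof (subst sum.swap, rule sum.cong[OF refl])
    fix k assume k: "k \<in> {1..m}"
    show "(\<Sum>n = 0..m. cc k * ((2 * real k - 1) * F n (k - 1) - 2 * real k * F n k)) =
          cc k * (\<Sum>n = 0..m. G (n + 1) k - G n k)"
      unfolding sum_distrib_left using k part1' by simp
  qed
  also have "... = (\<Sum>k=1..m. cc k * G (m+1) k)"
  proof (rule sum.cong[OF refl])
    fix k
    have "(\<Sum>n = 0..m. G (Suc n) k - G n k) = G (Suc m) k - G 0 k"
      by (rule sum_Suc_diff) simp
    then show "cc k * (\<Sum>n = 0..m. G (n + 1) k - G n k) = cc k * G (m + 1) k"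
      by (simp add: G_zero)
  qed
  also have "... = (\<Sum>k=1..m. 4 ^ (k - 1) * G (m + 1) k
                 / ((2 * real k - 1) * real ((2 * k - 2) choose (k - 1))))"
    unfolding cc_def by simp
  finally show ?thesis using cc_central[of M] unfolding Suc by (simp add: algebra_simps)
qed

theorem mainTheorem12:
  shows "(\<forall>n k. k \<ge> 1 \<longrightarrow>
            (2 * real k - 1) * F n (k - 1) - 2 * real k * F n k = G (n + 1) k - G n k)
       \<and> (\<forall>m. (\<Sum>n=0..m. F n 0) =
            4 ^ m / real ((2 * m) choose m) * F m m
            + (\<Sum>k=1..m. 4 ^ (k - 1) * G (m + 1) k
                 / ((2 * real k - 1) * real ((2 * k - 2) choose (k - 1)))))"
  using part1' part2 by blast

end
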